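(* If $p:X\to Y$ is a covering map and $Y$ is locally connected and paracompact, then $p$ is an overlay.
   Context: A covering map $p:X\to Y$ is a continuous surjection such that every point of $Y$ has an open neighborhood $V$ with $p^{-1}(V)$ a disjoint union of open sets each mapped homeomorphically onto $V$. For a continuous map $p:X\to Y$: a slice of $p$ is an open set $U\subseteq X$ such that $p^{-1}(p(U))$ is the disjoint union of a family of open sets $U_s$ ($s\in S$), each mapped by $p$ homeomorphically onto $p(U)$, with $U=U_t$ for some $t\in S$. A covering structure of $p$ is an open cover $\mathcal S$ of $X$ by slices of $p$ such that for every $U\in\mathcal S$, $p^{-1}(p(U))$ is the disjoint union of a family $\{U_j\}_{j\in J}$ of elements of $\mathcal S$, each mapped homeomorphically onto $p(U)$. For a cover $\mathcal S$ and $x\in X$, $st(x,\mathcal S)=\bigcup\{U\in\mathcal S: x\in U\}$. An overlay structure of $p$ is a covering structure $\mathcal S$ such that $st(x,\mathcal S)$ is a slice of $p$ for every $x\in X$. The map $p$ is an overlay if it has an overlay structure. *)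

theory Defs
  imports "HOL-Analysis.Analysis"
begin

definition covering_map :: "'a topology \<Rightarrow> 'b topology \<Rightarrow> ('a \<Rightarrow> 'b) \<Rightarrow> bool" where
  "covering_map X Y p \<longleftrightarrow>
     continuous_map X Y p \<and> p ` topspace X = topspace Y \<and>
     (\<forall>y \<in> topspace Y. \<exists>V. openin Y V \<and> y \<in> V \<and>
        (\<exists>\<U>. \<Union>\<U> = {x \<in> topspace X. p x \<in> V} \<and> (\<forall>U \<in> \<U>. openin X U) \<and>
             pairwise disjnt \<U> \<and>
             (\<forall>U \<in> \<U>. homeomorphic_map (subtopology X U) (subtopology Y V) p)))"

definition slice :: "'a topology \<Rightarrow> 'b topology \<Rightarrow> ('a \<Rightarrow> 'b) \<Rightarrow> 'a set \<Rightarrow> bool" where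
  "slice X Y p U \<longleftrightarrow> openin X U \<and>
     (\<exists>\<U>. U \<in> \<U> \<and> \<Union>\<U> = {x \<in> topspace X. p x \<in> p ` U} \<and> (\<forall>W \<in> \<U>. openin X W) \<and>
          pairwise disjnt \<U> \<and>
          (\<forall>W \<in> \<U>. homeomorphic_map (subtopology X W) (subtopology Y (p ` U)) p))"

definition covering_structure :: "'a topology \<Rightarrow> 'b topology \<Rightarrow> ('a \<Rightarrow> 'b) \<Rightarrow> 'a set set \<Rightarrow> bool" where
  "covering_structure X Y p \<S> \<longleftrightarrow>
     \<Union>\<S> = topspace X \<and> (\<forall>U \<in> \<S>. slice X Y p U) \<and>
     (\<forall>U \<in> \<S>. \<exists>\<U>. \<U> \<subseteq> \<S> \<and> \<Union>\<U> = {x \<in> topspace X. p x \<in> p ` U} \<and>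
          pairwise disjnt \<U> \<and>
          (\<forall>W \<in> \<U>. homeomorphic_map (subtopology X W) (subtopology Y (p ` U)) p))"

definition star :: "'a \<Rightarrow> 'a set set \<Rightarrow> 'a set" where
  "star x \<S> = \<Union>{U \<in> \<S>. x \<in> U}"

definition overlay_structure :: "'a topology \<Rightarrow> 'b topology \<Rightarrow> ('a \<Rightarrow> 'b) \<Rightarrow> 'a set set \<Rightarrow> bool" where
  "overlay_structure X Y p \<S> \<longleftrightarrow>
     covering_structure X Y p \<S> \<and> (\<forall>x \<in> topspace X. slice X Y p (star x \<S>))"

definition overlay :: "'a topology \<Rightarrow> 'b topology \<Rightarrow> ('a \<Rightarrow> 'b) \<Rightarrow> bool" where
  "overlay X Y p \<longleftrightarrow> (\<exists>\<S>. overlay_structure X Y p \<S>)"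

text \<open>Paracompactness (Hausdorff included, Engelking convention): every open cover
  has a locally finite open refinement covering the space.\<close>
definition paracompact_space :: "'a topology \<Rightarrow> bool" where
  "paracompact_space Y \<longleftrightarrow> Hausdorff_space Y \<and>
     (\<forall>\<U>. (\<forall>U \<in> \<U>. openin Y U) \<and> \<Union>\<U> = topspace Y \<longrightarrow>
        (\<exists>\<V>. (\<forall>V \<in> \<V>. openin Y V) \<and> \<Union>\<V> = topspace Y \<and>
             (\<forall>V \<in> \<V>. \<exists>U \<in> \<U>. V \<subseteq> U) \<and> locally_finite_in Y \<V>))"

end

theory Submission
  imports Defs
begin

lemma para_reg:
  assumes P: "paracompact_space Y" and W: "openin Y W" and y: "y \<in> W"
  shows "\<exists>N. openin Y N \<and> y \<in> N \<and> Y closure_of N \<subseteq> W"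
proof -
  have H: "Hausdorff_space Y" using P by (simp add: paracompact_space_def)
  have yt: "y \<in> topspace Y" using W y openin_subset by blast
  define \<U> where "\<U> = insert W {U. openin Y U \<and> y \<notin> Y closure_of U}"
  have cov: "\<Union>\<U> = topspace Y"
  proof
    show "\<Union>\<U> \<subseteq> topspace Y" using W by (auto simp: \<U>_def dest: openin_subset)
  next
    show "topspace Y \<subseteq> \<Union>\<U>"
    proof
      fix c assume c: "c \<in> topspace Y"
      show "c \<in> \<Union>\<U>"
      proof (cases "c \<in> W")
        case True then show ?thesis by (auto simp: \<U>_def)
      next
        case False
        then have "c \<noteq> y" using y by auto
        then obtain U V where UV: "openin Y U" "openin Y V" "c \<in> U" "y \<in> V" "disjnt U V"
          using H c yt unfolding Hausdorff_space_def by blast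
        have "y \<notin> Y closure_of U"
          using UV openin_Int_closure_of_eq_empty[of Y V U] by (auto simp: disjnt_def)
        then show ?thesis using UV by (auto simp: \<U>_def)
      qed
    qed
  qed
  have op: "\<forall>U\<in>\<U>. openin Y U" using W by (auto simp: \<U>_def)
  obtain \<V> where V: "\<forall>V\<in>\<V>. openin Y V" "\<Union>\<V> = topspace Y" "\<forall>V\<in>\<V>. \<exists>U\<in>\<U>. V \<subseteq> U"
      "locally_finite_in Y \<V>"
    using P[unfolded paracompact_space_def, THEN conjunct2, rule_format, of \<U>] cov op by auto
  define \<V>' where "\<V>' = {V\<in>\<V>. y \<notin> Y closure_of V}"
  have lf: "locally_finite_in Y \<V>'" by (rule locally_finite_in_subset[OF V(4)]) (auto simp: \<V>'_def)
  define M where "M = \<Union>\<V>'"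
  have cM: "Y closure_of M = \<Union>((\<lambda>S. Y closure_of S) ` \<V>')"
    unfolding M_def by (rule closure_of_locally_finite_Union[OF lf])
  have yM: "y \<notin> Y closure_of M" unfolding cM \<V>'_def by auto
  have oM: "openin Y M" unfolding M_def \<V>'_def using V(1) by auto
  define N where "N = topspace Y - Y closure_of M"
  have oN: "openin Y N" unfolding N_def by (simp add: openin_diff closedin_closure_of)
  have "N \<subseteq> topspace Y - M" using closure_of_subset[OF openin_subset[OF oM]] unfolding N_def by blast
  then have "Y closure_of N \<subseteq> topspace Y - M"
    by (simp add: closure_of_minimal closedin_diff oM)
  also have "\<dots> \<subseteq> W"
  proof
    fix c assume c: "c \<in> topspace Y - M"
    then obtain V where V1: "V \<in> \<V>" "c \<in> V" using V(2) by auto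
    then obtain U where U: "U \<in> \<U>" "V \<subseteq> U" using V(3) by auto
    have "V \<notin> \<V>'" using c V1 unfolding M_def by auto
    then have "y \<in> Y closure_of V" using V1 unfolding \<V>'_def by auto
    then have "y \<in> Y closure_of U" using U closure_of_mono by blast
    then have "U = W" using U(1) unfolding \<U>_def by auto
    then show "c \<in> W" using U V1 by auto
  qed
  finally have "Y closure_of N \<subseteq> W" .
  moreover have "y \<in> N" using yM yt unfolding N_def by blast
  ultimately show ?thesis using oN by blast
qed

lemma para_star:
  assumes P: "paracompact_space Y" and opW: "\<forall>W\<in>\<W>. openin Y W" and cov: "\<Union>\<W> = topspace Y"
  shows "\<exists>\<O>. (\<forall>Q\<in>\<O>. openin Y Q) \<and> \<Union>\<O> = topspace Y \<and>
           (\<forall>y\<in>topspace Y. \<exists>W\<in>\<W>. \<forall>Q\<in>\<O>. y \<in> Q \<longrightarrow> Q \<subseteq> W)"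
proof -
  define \<W>' where "\<W>' = {N. openin Y N \<and> (\<exists>W\<in>\<W>. Y closure_of N \<subseteq> W)}"
  have op': "\<forall>U\<in>\<W>'. openin Y U" unfolding \<W>'_def by blast
  have cov': "\<Union>\<W>' = topspace Y"
  proof
    show "\<Union>\<W>' \<subseteq> topspace Y" unfolding \<W>'_def using openin_subset by blast
  next
    show "topspace Y \<subseteq> \<Union>\<W>'"
    proof
      fix y assume "y \<in> topspace Y"
      then obtain W where "W \<in> \<W>" "y \<in> W" using cov by blast
      then obtain N where "openin Y N" "y \<in> N" "Y closure_of N \<subseteq> W"
        using para_reg[OF P] opW by meson
      then show "y \<in> \<Union>\<W>'" unfolding \<W>'_def using \<open>W \<in> \<W>\<close> by blast
    qed
  qed
  obtain \<V> where V: "\<forall>V\<in>\<V>. openin Y V" "\<Union>\<V> = topspace Y" "\<forall>V\<in>\<V>. \<exists>U\<in>\<W>'. V \<subseteq> U"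
      "locally_finite_in Y \<V>"
    using P[unfolded paracompact_space_def, THEN conjunct2, rule_format, of \<W>'] cov' op' by auto
  have "\<forall>V\<in>\<V>. \<exists>W\<in>\<W>. Y closure_of V \<subseteq> W"
  proof
    fix V assume "V \<in> \<V>"
    then obtain U where "U \<in> \<W>'" "V \<subseteq> U" using V(3) by blast
    then obtain W where "W \<in> \<W>" "Y closure_of U \<subseteq> W" unfolding \<W>'_def by blast
    moreover have "Y closure_of V \<subseteq> Y closure_of U" using \<open>V \<subseteq> U\<close> by (rule closure_of_mono)
    ultimately show "\<exists>W\<in>\<W>. Y closure_of V \<subseteq> W" by blast
  qed
  then obtain f where f: "\<And>V. V \<in> \<V> \<Longrightarrow> f V \<in> \<W> \<and> Y closure_of V \<subseteq> f V" by metis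
  define Of where "Of z = (topspace Y - \<Union>((\<lambda>S. Y closure_of S) ` {V\<in>\<V>. z \<notin> Y closure_of V}))
        \<inter> \<Inter>(f ` {V\<in>\<V>. z \<in> Y closure_of V})" for z
  have Oopen: "openin Y (Of z)" if z: "z \<in> topspace Y" for z
  proof -
    have "closedin Y (\<Union>((\<lambda>S. Y closure_of S) ` {V\<in>\<V>. z \<notin> Y closure_of V}))"
      by (rule closedin_Union_locally_finite_closure, rule locally_finite_in_subset[OF V(4)]) blast
    then have 1: "openin Y (topspace Y - \<Union>((\<lambda>S. Y closure_of S) ` {V\<in>\<V>. z \<notin> Y closure_of V}))"
      by (simp add: openin_diff)
    obtain N where N: "openin Y N" "z \<in> N" "finite {U \<in> \<V>. U \<inter> N \<noteq> {}}"
      using V(4) z unfolding locally_finite_in_def by blast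
    have "{V\<in>\<V>. z \<in> Y closure_of V} \<subseteq> {U \<in> \<V>. U \<inter> N \<noteq> {}}"
      using N openin_Int_closure_of_eq_empty by blast
    then have fin: "finite (f ` {V\<in>\<V>. z \<in> Y closure_of V})"
      using N(3) finite_subset by blast
    obtain V0 where "V0 \<in> \<V>" "z \<in> V0" using V(2) z by blast
    then have "z \<in> Y closure_of V0" using closure_of_subset[of V0 Y] V(1) openin_subset by blast
    then have ne: "f ` {V\<in>\<V>. z \<in> Y closure_of V} \<noteq> {}" using \<open>V0 \<in> \<V>\<close> by blast
    have 2: "openin Y (\<Inter>(f ` {V\<in>\<V>. z \<in> Y closure_of V}))"
      by (rule openin_Inter[OF fin ne]) (use f opW in blast)
    show ?thesis unfolding Of_def using 1 2 by (rule openin_Int)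
  qed
  have zO: "z \<in> Of z" if z: "z \<in> topspace Y" for z
    unfolding Of_def using z f by blast
  show ?thesis
  proof (intro exI conjI ballI)
    show "\<And>U. U \<in> Of ` topspace Y \<Longrightarrow> openin Y U" using Oopen by blast
    show "\<Union>(Of ` topspace Y) = topspace Y" using zO Oopen openin_subset by blast
  next
    fix y assume y: "y \<in> topspace Y"
    obtain V0 where V0: "V0 \<in> \<V>" "y \<in> V0" using V(2) y by blast
    then have yc: "y \<in> Y closure_of V0" using closure_of_subset[of V0 Y] V(1) openin_subset by blast
    show "\<exists>W\<in>\<W>. \<forall>U\<in>Of ` topspace Y. y \<in> U \<longrightarrow> U \<subseteq> W"
    proof (intro bexI ballI impI)
      show "f V0 \<in> \<W>" using f V0 by blast
      fix U assume "U \<in> Of ` topspace Y" "y \<in> U"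
      then obtain z where z: "z \<in> topspace Y" "U = Of z" by blast
      have "z \<in> Y closure_of V0"
      proof (rule ccontr)
        assume "z \<notin> Y closure_of V0"
        then have "y \<notin> Of z" unfolding Of_def using V0 yc by blast
        then show False using \<open>y \<in> U\<close> z by blast
      qed
      then show "U \<subseteq> f V0" unfolding z Of_def using V0 by blast
    qed
  qed
qed

definition evc :: "'a topology \<Rightarrow> 'b topology \<Rightarrow> ('a \<Rightarrow> 'b) \<Rightarrow> 'b set \<Rightarrow> 'a set set \<Rightarrow> bool" where
  "evc X Y p W \<U> \<longleftrightarrow> \<Union>\<U> = {x \<in> topspace X. p x \<in> W} \<and> (\<forall>U \<in> \<U>. openin X U) \<and>
             pairwise disjnt \<U> \<and>
             (\<forall>U \<in> \<U>. homeomorphic_map (subtopology X U) (subtopology Y W) p)"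

lemma slice_evc: "slice X Y p U \<longleftrightarrow> openin X U \<and> (\<exists>\<U>. U \<in> \<U> \<and> evc X Y p (p ` U) \<U>)"
  unfolding slice_def evc_def by blast

lemma evcD:
  assumes "evc X Y p W \<U>"
  shows "\<Union>\<U> = {x \<in> topspace X. p x \<in> W}" "\<And>U. U \<in> \<U> \<Longrightarrow> openin X U" "pairwise disjnt \<U>"
    "\<And>U. U \<in> \<U> \<Longrightarrow> homeomorphic_map (subtopology X U) (subtopology Y W) p"
  using assms unfolding evc_def by auto

lemma evc_img:
  assumes "evc X Y p W \<U>" "U \<in> \<U>" "W \<subseteq> topspace Y"
  shows "p ` U = W"
proof -
  have h: "homeomorphic_map (subtopology X U) (subtopology Y W) p" "openin X U"
    using assms unfolding evc_def by auto
  have "p ` (topspace X \<inter> U) = topspace Y \<inter> W"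
    using homeomorphic_imp_surjective_map[OF h(1)] by simp
  moreover have "topspace X \<inter> U = U" using openin_subset[OF h(2)] by blast
  moreover have "topspace Y \<inter> W = W" using assms(3) by blast
  ultimately show ?thesis by simp
qed

lemma evc_restrict:
  assumes e: "evc X Y p W \<U>" and BW: "B \<subseteq> W" and oB: "openin Y B" and cm: "continuous_map X Y p"
  shows "evc X Y p B ((\<lambda>U. U \<inter> {x \<in> topspace X. p x \<in> B}) ` \<U>)"
proof -
  let ?P = "{x \<in> topspace X. p x \<in> B}"
  have oP: "openin X ?P" using openin_continuous_map_preimage[OF cm oB] .
  have u: "\<Union>\<U> = {x \<in> topspace X. p x \<in> W}" and o: "\<forall>U \<in> \<U>. openin X U"
    and d: "pairwise disjnt \<U>" and h: "\<forall>U \<in> \<U>. homeomorphic_map (subtopology X U) (subtopology Y W) p"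
    using e unfolding evc_def by auto
  have "\<Union>((\<lambda>U. U \<inter> ?P) ` \<U>) = ?P" using u BW by blast
  moreover have "\<forall>U' \<in> (\<lambda>U. U \<inter> ?P) ` \<U>. openin X U'" using o oP by blast
  moreover have "pairwise disjnt ((\<lambda>U. U \<inter> ?P) ` \<U>)"
    using d unfolding pairwise_def disjnt_def by blast
  moreover have "\<forall>U' \<in> (\<lambda>U. U \<inter> ?P) ` \<U>. homeomorphic_map (subtopology X U') (subtopology Y B) p"
  proof
    fix U' assume "U' \<in> (\<lambda>U. U \<inter> ?P) ` \<U>"
    then obtain U where U: "U \<in> \<U>" "U' = U \<inter> ?P" by blast
    have hU: "homeomorphic_map (subtopology X U) (subtopology Y W) p" using h U by blast
    have sur: "p ` (topspace X \<inter> U) = topspace Y \<inter> W"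
      using homeomorphic_imp_surjective_map[OF hU] by simp
    have "p ` (topspace (subtopology X U) \<inter> (U \<inter> ?P)) = topspace (subtopology Y W) \<inter> B"
    proof
      show "p ` (topspace (subtopology X U) \<inter> (U \<inter> ?P)) \<subseteq> topspace (subtopology Y W) \<inter> B"
        using sur by auto
    next
      show "topspace (subtopology Y W) \<inter> B \<subseteq> p ` (topspace (subtopology X U) \<inter> (U \<inter> ?P))"
      proof
        fix b assume b: "b \<in> topspace (subtopology Y W) \<inter> B"
        then have "b \<in> topspace Y \<inter> W" by simp
        then obtain u where "u \<in> topspace X \<inter> U" "b = p u" using sur by (metis imageE)
        then show "b \<in> p ` (topspace (subtopology X U) \<inter> (U \<inter> ?P))" using b by auto
      qed
    qed
    from homeomorphic_map_subtopologies[OF hU this]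
    have "homeomorphic_map (subtopology X (U \<inter> (U \<inter> ?P))) (subtopology Y (W \<inter> B)) p"
      by (simp add: subtopology_subtopology)
    moreover have "U \<inter> (U \<inter> ?P) = U'" "W \<inter> B = B" using U BW by auto
    ultimately show "homeomorphic_map (subtopology X U') (subtopology Y B) p" by simp
  qed
  ultimately show ?thesis unfolding evc_def by blast
qed

theorem corollary4p8:
  fixes X :: "'a topology" and Y :: "'b topology" and p :: "'a \<Rightarrow> 'b"
  assumes "covering_map X Y p"
    and "locally_connected_space Y"
    and "paracompact_space Y"
  shows "overlay X Y p"
proof -
  have cm: "continuous_map X Y p"
    using assms(1)[unfolded covering_map_def] by (rule conjunct1)
  have loc: "\<forall>y \<in> topspace Y. \<exists>V. openin Y V \<and> y \<in> V \<and> (\<exists>\<U>. evc X Y p V \<U>)"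
    unfolding evc_def by (rule assms(1)[unfolded covering_map_def, THEN conjunct2, THEN conjunct2])
  define \<W> where "\<W> = {W. openin Y W \<and> (\<exists>\<U>. evc X Y p W \<U>)}"
  have opW: "\<forall>W\<in>\<W>. openin Y W" unfolding \<W>_def by blast
  have covW: "\<Union>\<W> = topspace Y"
  proof
    show "\<Union>\<W> \<subseteq> topspace Y" using opW openin_subset by blast
    show "topspace Y \<subseteq> \<Union>\<W>"
    proof
      fix y assume "y \<in> topspace Y"
      then obtain V \<U> where "openin Y V" "y \<in> V" "evc X Y p V \<U>" using loc by blast
      then show "y \<in> \<Union>\<W>" unfolding \<W>_def by blast
    qed
  qed
  from para_star[OF assms(3) opW covW] obtain \<O> where O0: "(\<forall>Q\<in>\<O>. openin Y Q) \<and> \<Union>\<O> = topspace Y \<and>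
      (\<forall>y\<in>topspace Y. \<exists>W\<in>\<W>. \<forall>Q\<in>\<O>. y \<in> Q \<longrightarrow> Q \<subseteq> W)" ..
  note O = conjunct1[OF O0] conjunct1[OF conjunct2[OF O0]] conjunct2[OF conjunct2[OF O0]]
  define \<C> where "\<C> = {C. openin Y C \<and> connectedin Y C \<and> C \<noteq> {} \<and> (\<exists>Q\<in>\<O>. C \<subseteq> Q)}"
  have C_open: "\<And>C. C \<in> \<C> \<Longrightarrow> openin Y C" and C_conn: "\<And>C. C \<in> \<C> \<Longrightarrow> connectedin Y C"
    unfolding \<C>_def by blast+
  have C_sub: "\<And>C. C \<in> \<C> \<Longrightarrow> C \<subseteq> topspace Y" using C_open openin_subset by blast
  have covC: "\<forall>y\<in>topspace Y. \<exists>C\<in>\<C>. y \<in> C"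
  proof
    fix y assume y: "y \<in> topspace Y"
    then obtain Q where Q: "Q \<in> \<O>" "y \<in> Q" using O(2) by blast
    then obtain C where "openin Y C" "connectedin Y C" "y \<in> C" "C \<subseteq> Q"
      using assms(2) O(1) unfolding locally_connected_space by meson
    then show "\<exists>C\<in>\<C>. y \<in> C" unfolding \<C>_def using Q by blast
  qed
  have starC: "\<forall>y\<in>topspace Y. \<exists>W\<in>\<W>. \<forall>C\<in>\<C>. y \<in> C \<longrightarrow> C \<subseteq> W"
  proof
    fix y assume y: "y \<in> topspace Y"
    then obtain W where W: "W \<in> \<W>" "\<forall>Q\<in>\<O>. y \<in> Q \<longrightarrow> Q \<subseteq> W" using O(3) by blast
    have "\<forall>C\<in>\<C>. y \<in> C \<longrightarrow> C \<subseteq> W"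
    proof (intro ballI impI)
      fix C assume "C \<in> \<C>" "y \<in> C"
      then obtain Q where "Q \<in> \<O>" "C \<subseteq> Q" unfolding \<C>_def by blast
      then show "C \<subseteq> W" using W \<open>y \<in> C\<close> by blast
    qed
    then show "\<exists>W\<in>\<W>. \<forall>C\<in>\<C>. y \<in> C \<longrightarrow> C \<subseteq> W" using W by blast
  qed
  have "\<forall>C\<in>\<C>. \<exists>\<U>. evc X Y p C \<U>"
  proof
    fix C assume C: "C \<in> \<C>"
    then obtain y where y: "y \<in> C" unfolding \<C>_def by blast
    then have "y \<in> topspace Y" using C_sub C by blast
    then obtain W where W: "W \<in> \<W>" "\<forall>C\<in>\<C>. y \<in> C \<longrightarrow> C \<subseteq> W" using starC by blast
    then obtain \<U> where "evc X Y p W \<U>" unfolding \<W>_def by blast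
    from evc_restrict[OF this _ C_open[OF C] cm] W C y
    show "\<exists>\<U>. evc X Y p C \<U>" by blast
  qed
  then obtain sh where sh: "\<And>C. C \<in> \<C> \<Longrightarrow> evc X Y p C (sh C)" by metis
  define \<S> where "\<S> = \<Union>(sh ` \<C>)"
  have S_info: "\<exists>C\<in>\<C>. U \<in> sh C \<and> p ` U = C \<and> openin X U \<and> evc X Y p C (sh C)" if US: "U \<in> \<S>" for U
  proof -
    obtain C where C: "C \<in> \<C>" "U \<in> sh C" using US unfolding \<S>_def by blast
    have "p ` U = C" by (rule evc_img[OF sh[OF C(1)] C(2) C_sub[OF C(1)]])
    moreover have "openin X U" using sh[OF C(1)] C(2) unfolding evc_def by blast
    ultimately show ?thesis using C sh by blast
  qed
  have cs: "covering_structure X Y p \<S>"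
    unfolding covering_structure_def
  proof (intro conjI ballI)
    show "\<Union>\<S> = topspace X"
    proof
      show "\<Union>\<S> \<subseteq> topspace X" using S_info openin_subset by blast
      show "topspace X \<subseteq> \<Union>\<S>"
      proof
        fix x assume x: "x \<in> topspace X"
        then have "p x \<in> topspace Y" using cm by (auto simp: continuous_map_def Pi_iff)
        then obtain C where C: "C \<in> \<C>" "p x \<in> C" using covC by blast
        then have "x \<in> \<Union>(sh C)" using sh[OF C(1)] x unfolding evc_def by blast
        then show "x \<in> \<Union>\<S>" using C unfolding \<S>_def by blast
      qed
    qed
  next
    fix U assume U: "U \<in> \<S>"
    then obtain C where C: "C \<in> \<C>" "U \<in> sh C" "p ` U = C" "openin X U" "evc X Y p C (sh C)"
      using S_info by blast
    show "slice X Y p U" unfolding slice_evc using C by auto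
    have "sh C \<subseteq> \<S>" unfolding \<S>_def using C by blast
    then show "\<exists>\<U>\<subseteq>\<S>. \<Union>\<U> = {x \<in> topspace X. p x \<in> p ` U} \<and> pairwise disjnt \<U> \<and>
          (\<forall>W\<in>\<U>. homeomorphic_map (subtopology X W) (subtopology Y (p ` U)) p)"
      using C unfolding evc_def by auto
  qed
  have stars: "slice X Y p (star x \<S>)" if x: "x \<in> topspace X" for x
  proof -
    have y: "p x \<in> topspace Y" using cm x by (auto simp: continuous_map_def Pi_iff)
    then obtain W where W: "W \<in> \<W>" "\<forall>C\<in>\<C>. p x \<in> C \<longrightarrow> C \<subseteq> W" using starC by blast
    then obtain \<U>W where eW: "evc X Y p W \<U>W" unfolding \<W>_def by blast
    have oW: "openin Y W" using W \<W>_def by blast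
    obtain C0 where "C0 \<in> \<C>" "p x \<in> C0" using covC y by blast
    then have "p x \<in> W" using W by blast
    then have "x \<in> \<Union>\<U>W" using evcD(1)[OF eW] x by blast
    then obtain U0 where U0: "U0 \<in> \<U>W" "x \<in> U0" by blast
    have oU0: "openin X U0" using evcD(2)[OF eW U0(1)] .
    have hU0: "homeomorphic_map (subtopology X U0) (subtopology Y W) p" using evcD(4)[OF eW U0(1)] .
    have sub: "U \<subseteq> U0" if U: "U \<in> \<S>" "x \<in> U" for U
    proof -
      obtain C where C: "C \<in> \<C>" "U \<in> sh C" "p ` U = C" "openin X U" "evc X Y p C (sh C)"
        using S_info U(1) by blast
      have hU: "homeomorphic_map (subtopology X U) (subtopology Y C) p"
        using evcD(4)[OF C(5) C(2)] .
      have Ut: "U \<subseteq> topspace X" using C(4) openin_subset by blast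
      have "connectedin (subtopology Y C) C" using C_conn[OF C(1)] by (simp add: connectedin_subtopology)
      then have "connectedin (subtopology X U) U"
        using homeomorphic_map_connectedness_eq[OF hU, of U] C(3) Ut by simp
      then have cU: "connectedin X U" by (simp add: connectedin_subtopology)
      have "C \<subseteq> W" using W C U by blast
      then have "U \<subseteq> \<Union>\<U>W" using evcD(1)[OF eW] Ut C(3) by blast
      then have cov2: "U \<subseteq> U0 \<union> \<Union>(\<U>W - {U0})" by blast
      have oR: "openin X (\<Union>(\<U>W - {U0}))" by (rule openin_Union) (use evcD(2)[OF eW] in blast)
      have "disjnt U0 (\<Union>(\<U>W - {U0}))"
        using evcD(3)[OF eW] U0(1) by (auto simp: pairwise_def disjnt_def)
      then have sep: "separatedin X U0 (\<Union>(\<U>W - {U0}))"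
        using separatedin_open_sets[OF oU0 oR] by blast
      have "\<not> U \<subseteq> \<Union>(\<U>W - {U0})"
        using U(2) U0 \<open>disjnt U0 (\<Union>(\<U>W - {U0}))\<close> unfolding disjnt_def by blast
      then show "U \<subseteq> U0" using connectedin_subset_separated_union[OF cU sep cov2] by blast
    qed
    define Z where "Z = star x \<S>"
    have ZU0: "Z \<subseteq> U0" unfolding Z_def star_def using sub by blast
    have oZ: "openin X Z" unfolding Z_def star_def by (rule openin_Union) (use S_info in blast)
    have pZ: "p ` Z = \<Union>{p ` U | U. U \<in> \<S> \<and> x \<in> U}" unfolding Z_def star_def by blast
    have oB: "openin Y (p ` Z)" unfolding pZ by (rule openin_Union) (use S_info C_open in blast)
    have BW: "p ` Z \<subseteq> W"
    proof -
      have "p ` U0 = W" by (rule evc_img[OF eW U0(1) openin_subset[OF oW]])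
      then show ?thesis using ZU0 by blast
    qed
    let ?F = "(\<lambda>U. U \<inter> {x \<in> topspace X. p x \<in> p ` Z}) ` \<U>W"
    have eF: "evc X Y p (p ` Z) ?F" by (rule evc_restrict[OF eW BW oB cm])
    have inj: "inj_on p U0"
      using homeomorphic_imp_injective_map[OF hU0] openin_subset[OF oU0] by (simp add: Int_absorb1)
    have "Z = U0 \<inter> {x \<in> topspace X. p x \<in> p ` Z}"
    proof
      show "Z \<subseteq> U0 \<inter> {x \<in> topspace X. p x \<in> p ` Z}" using ZU0 openin_subset[OF oZ] by blast
      show "U0 \<inter> {x \<in> topspace X. p x \<in> p ` Z} \<subseteq> Z"
      proof
        fix z' assume z': "z' \<in> U0 \<inter> {x \<in> topspace X. p x \<in> p ` Z}"
        then obtain z where "z \<in> Z" "p z' = p z" by blast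
        then have "z' = z" using inj ZU0 z' unfolding inj_on_def by blast
        then show "z' \<in> Z" using \<open>z \<in> Z\<close> by simp
      qed
    qed
    then have "Z \<in> ?F" using U0(1) by blast
    then have "slice X Y p Z" unfolding slice_evc
      by (intro conjI exI[of _ ?F] oZ eF)
    then show ?thesis unfolding Z_def .
  qed
  have "overlay_structure X Y p \<S>" unfolding overlay_structure_def
    by (intro conjI cs ballI stars)
  then show ?thesis unfolding overlay_def by (rule exI)
qed

end
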